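(* Let $G$ be a graph of order $n$ with $\alpha(G)=2$. Then $m_G[0,n-2]=2$ if and only if $G \cong K_1 \nabla K_{n-m} \nabla K_{m-1}$ for some integer $m$ with $2\le m\le n$; equivalently, $G\cong (K_1\cup K_{m-1})\nabla K_{n-m}$ (where $K_0$ denotes the empty graph).
   Context: All graphs are finite and simple. The Laplacian matrix of $G$ is $L(G)=D(G)-A(G)$ ($D(G)$ the diagonal degree matrix, $A(G)$ the adjacency matrix); its eigenvalues with multiplicity are the Laplacian eigenvalues. For an interval $I$, $m_G I$ is the number of Laplacian eigenvalues of $G$ (with multiplicity) in $I$. $\alpha(G)$ is the independence number. $K_k$ is the complete graph on $k$ vertices, $G_1\cup G_2$ is disjoint union. For pairwise disjoint graphs $G_1,\dots,G_k$, $G_1\nabla G_2\nabla\cdots\nabla G_k$ is the graph obtained from $G_1\cup\cdots\cup G_k$ by adding all edges $xy$ with $x\in V(G_i)$, $y\in V(G_{i+1})$ for $i=1,\dots,k-1$; in particular $G_1\nabla G_2$ is the join. *)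

theory Defs
  imports "Jordan_Normal_Form.Char_Poly"
begin

(* A finite simple graph of order n: vertex set {0..<n}, adjacency relation E
   (only its restriction to {0..<n} matters), symmetric and irreflexive. *)
definition simple_graph :: "nat \<Rightarrow> (nat \<Rightarrow> nat \<Rightarrow> bool) \<Rightarrow> bool" where
  "simple_graph n E \<longleftrightarrow>
     (\<forall>i<n. \<not> E i i) \<and> (\<forall>i<n. \<forall>j<n. E i j \<longrightarrow> E j i)"

definition independent_set :: "nat \<Rightarrow> (nat \<Rightarrow> nat \<Rightarrow> bool) \<Rightarrow> nat set \<Rightarrow> bool" where
  "independent_set n E S \<longleftrightarrow> S \<subseteq> {0..<n} \<and> (\<forall>u\<in>S. \<forall>v\<in>S. \<not> E u v)"

definition independence_number :: "nat \<Rightarrow> (nat \<Rightarrow> nat \<Rightarrow> bool) \<Rightarrow> nat" where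
  "independence_number n E = Max (card ` {S. independent_set n E S})"

definition laplacian :: "nat \<Rightarrow> (nat \<Rightarrow> nat \<Rightarrow> bool) \<Rightarrow> real mat" where
  "laplacian n E = mat n n (\<lambda>(i,j).
     (if i = j then real (card {k. k < n \<and> E i k}) else 0) - (if E i j then 1 else 0))"

(* m_G I: number of Laplacian eigenvalues (with multiplicity) in I;
   the multiplicity of an eigenvalue is its multiplicity as a root of the
   characteristic polynomial *)
definition lap_count :: "nat \<Rightarrow> (nat \<Rightarrow> nat \<Rightarrow> bool) \<Rightarrow> real set \<Rightarrow> nat" where
  "lap_count n E I =
     (\<Sum>x\<in>{x\<in>I. poly (char_poly (laplacian n E)) x = 0}. order x (char_poly (laplacian n E)))"

definition block_of :: "nat list \<Rightarrow> nat \<Rightarrow> nat" where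
  "block_of ks v = (LEAST i. v < sum_list (take (Suc i) ks))"

(* K_{k_1} \<nabla> K_{k_2} \<nabla> ... \<nabla> K_{k_r} on vertex set {0..<sum_list ks}:
   consecutive blocks of sizes k_1,...,k_r (blocks may be empty = K_0);
   distinct vertices adjacent iff in the same or in consecutive blocks. *)
definition clique_chain :: "nat list \<Rightarrow> nat \<Rightarrow> nat \<Rightarrow> bool" where
  "clique_chain ks u v \<longleftrightarrow> u \<noteq> v \<and>
     (block_of ks u = block_of ks v \<or> block_of ks u = Suc (block_of ks v)
      \<or> block_of ks v = Suc (block_of ks u))"

definition graph_iso :: "nat \<Rightarrow> (nat \<Rightarrow> nat \<Rightarrow> bool) \<Rightarrow> (nat \<Rightarrow> nat \<Rightarrow> bool) \<Rightarrow> bool" where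
  "graph_iso n E H \<longleftrightarrow> (\<exists>f. bij_betw f {0..<n} {0..<n} \<and>
     (\<forall>i<n. \<forall>j<n. E i j \<longleftrightarrow> H (f i) (f j)))"

end

theory Submission
  imports Defs "Jordan_Normal_Form.Schur_Decomposition" "HOL-Computational_Algebra.Fundamental_Theorem_Algebra"
begin


lemma sym_real_eig:
  fixes A :: "real mat"
  assumes A: "A \<in> carrier_mat n n" and n: "n > 0"
    and sym: "\<And>i j. i<n \<Longrightarrow> j<n \<Longrightarrow> A $$ (i,j) = A $$ (j,i)"
  shows "\<exists>e. eigenvalue A e"
proof -
  let ?p = "char_poly A"
  let ?Ac = "map_mat complex_of_real A"
  have deg: "degree ?p = n" using degree_monic_char_poly[OF A] by auto
  have cp: "char_poly ?Ac = map_poly of_real ?p" using of_real_hom.char_poly_hom[OF A] by simp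
  have "\<not> constant (poly (map_poly complex_of_real ?p))" using deg n by (simp add: constant_degree)
  then obtain z where z: "poly (map_poly complex_of_real ?p) z = 0"
    using fundamental_theorem_of_algebra by blast
  have Ac: "?Ac \<in> carrier_mat n n" using A by simp
  have "eigenvalue ?Ac z" using eigenvalue_root_char_poly[OF Ac] cp z by simp
  then obtain v where ev: "eigenvector ?Ac v z" unfolding eigenvalue_def by blast
  hence v: "v \<in> carrier_vec n" and v0: "v \<noteq> 0\<^sub>v n" and Av: "?Ac *\<^sub>v v = z \<cdot>\<^sub>v v"
    using A unfolding eigenvector_def by auto
  define s where "s = (\<Sum>i<n. \<Sum>j<n. cnj (v$i) * of_real (A$$(i,j)) * v$j)"
  define r where "r = (\<Sum>i<n. cnj (v$i) * v$i)"
  have "s = (\<Sum>i<n. cnj (v$i) * (?Ac *\<^sub>v v) $ i)"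
    unfolding s_def
  proof (rule sum.cong[OF refl])
    fix i assume i: "i \<in> {..<n}"
    have "(?Ac *\<^sub>v v) $ i = (\<Sum>j<n. of_real (A$$(i,j)) * v$j)"
      using i A v by (auto simp: scalar_prod_def lessThan_atLeast0)
    thus "(\<Sum>j<n. cnj (v$i) * of_real (A$$(i,j)) * v$j) = cnj (v$i) * (?Ac *\<^sub>v v) $ i"
      by (simp add: sum_distrib_left mult.assoc)
  qed
  also have "\<dots> = z * r" unfolding Av r_def using v
    by (auto simp: sum_distrib_left intro!: sum.cong)
  finally have sr: "s = z * r" .
  have "cnj s = (\<Sum>i<n. \<Sum>j<n. v$i * of_real (A$$(i,j)) * cnj (v$j))"
    unfolding s_def by simp
  also have "\<dots> = (\<Sum>j<n. \<Sum>i<n. v$i * of_real (A$$(i,j)) * cnj (v$j))"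
    by (rule sum.swap)
  also have "\<dots> = s" unfolding s_def
    by (auto intro!: sum.cong simp: sym mult.commute mult.left_commute)
  finally have cs: "cnj s = s" .
  have cx: "\<And>x. cnj x * x = complex_of_real ((cmod x)^2)"
    by (metis complex_norm_square mult.commute of_real_power)
  have r_eq: "r = of_real (\<Sum>i<n. (cmod (v$i))^2)" unfolding r_def
    by (simp add: cx)
  obtain i where i: "i < n" "v $ i \<noteq> 0" using v v0 by (metis eq_vecI carrier_vecD index_zero_vec(1) index_zero_vec(2))
  have "(cmod (v$i))^2 > 0" using i by simp
  hence rpos: "(\<Sum>i<n. (cmod (v$i))^2) > 0"
    using i by (intro sum_pos2[of _ i]) auto
  hence r0: "r \<noteq> 0" using r_eq by (metis of_real_eq_0_iff order_less_irrefl)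
  have cr: "cnj r = r" by (simp only: r_eq complex_cnj_complex_of_real)
  have zr: "z = s / r" using sr r0 by simp
  have czz: "cnj z = z" by (simp only: zr complex_cnj_divide cs cr)
  have "Im z = 0" using arg_cong[OF czz, of Im] by simp
  hence zre: "z = of_real (Re z)" by (simp add: complex_eq_iff)
  have "complex_of_real (poly ?p (Re z)) = poly (map_poly complex_of_real ?p) (of_real (Re z))"
    by (rule of_real_hom.poly_map_poly[symmetric])
  also have "\<dots> = 0" using z zre by simp
  finally have "complex_of_real (poly ?p (Re z)) = 0" .
  hence "poly ?p (Re z) = 0" by simp
  thus ?thesis using eigenvalue_root_char_poly[OF A] by blast
qed



definition diagm :: "real list \<Rightarrow> real mat" where
  "diagm ds = mat (length ds) (length ds) (\<lambda>(i,j). if i = j then ds!i else 0)"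

lemma real_sq_pos: fixes v :: "real vec" assumes "v \<in> carrier_vec n" "v \<noteq> 0\<^sub>v n"
  shows "v \<bullet> v > 0"
  using conjugate_square_greater_0_vec[OF assms(1)] assms(2) by simp

lemma spectral:
  fixes A :: "real mat"
  assumes "A \<in> carrier_mat n n" "transpose_mat A = A"
  shows "\<exists>Q ds. Q \<in> carrier_mat n n \<and> transpose_mat Q * Q = 1\<^sub>m n \<and> length ds = n
      \<and> transpose_mat Q * A * Q = diagm ds"
  using assms
proof (induction n arbitrary: A)
  case 0
  thus ?case by (intro exI[of _ "1\<^sub>m 0"] exI[of _ "[]"]) (auto simp: diagm_def intro!: eq_matI)
next
  case (Suc k A)
  let ?n = "Suc k"
  have A: "A \<in> carrier_mat ?n ?n" and sym: "transpose_mat A = A" using Suc.prems by auto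
  have symE: "\<And>i j. i < ?n \<Longrightarrow> j < ?n \<Longrightarrow> A$$(i,j) = A$$(j,i)"
    using sym A by (metis index_transpose_mat(1) carrier_matD(1) carrier_matD(2))
  obtain e where e: "eigenvalue A e" using sym_real_eig[OF A _ symE] by auto
  define v where "v = find_eigenvector A e"
  have v: "v \<in> carrier_vec ?n" "v \<noteq> 0\<^sub>v ?n" "A *\<^sub>v v = e \<cdot>\<^sub>v v"
    using find_eigenvector[OF A e] A unfolding v_def eigenvector_def by auto
  have vv: "v \<bullet> v > 0" using real_sq_pos[OF v(1,2)] .
  define u where "u = (1 / sqrt (v \<bullet> v)) \<cdot>\<^sub>v v"
  have u1: "u \<in> carrier_vec ?n" unfolding u_def using v by simp
  have uu: "u \<bullet> u = 1" unfolding u_def using v(1) vv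
    by (simp add: real_sqrt_mult[symmetric]) 
  have u0: "u \<noteq> 0\<^sub>v ?n" using uu u1 by auto
  have Au: "A *\<^sub>v u = e \<cdot>\<^sub>v u" unfolding u_def
    using mult_mat_vec[OF A v(1)] v(3) by (simp add: smult_smult_assoc mult.commute)
  interpret cof_vec_space ?n "TYPE(real)" .
  define b where "b = basis_completion u"
  from basis_completion[OF u1 u0, folded b_def]
  have dist_b: "distinct b" and indep: "\<not> lin_dep (set b)" and bC: "set b \<subseteq> carrier_vec ?n"
    and hdb: "hd b = u" and len_b: "length b = ?n" by auto
  from hdb len_b obtain bs where bv: "b = u # bs" by (cases b, auto)
  define ws where "ws = gram_schmidt ?n b"
  from gram_schmidt_result[OF bC dist_b indep refl, folded ws_def]
  have wsC: "set ws \<subseteq> carrier_vec ?n" and orth: "corthogonal ws" and len_ws: "length ws = ?n"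
    by (auto simp: len_b)
  have hdws: "hd ws = u" using gram_schmidt_hd[OF u1, of bs] unfolding ws_def bv .
  have ws0: "ws ! 0 = u" using hdws len_ws by (cases ws, auto)
  have wsi: "\<And>i. i < ?n \<Longrightarrow> ws ! i \<in> carrier_vec ?n" using wsC len_ws by auto
  have wsorth: "\<And>i j. i < ?n \<Longrightarrow> j < ?n \<Longrightarrow> ws!i \<bullet> ws!j = 0 \<longleftrightarrow> i \<noteq> j"
    using corthogonalD[OF orth] len_ws by simp
  have wspos: "\<And>i. i < ?n \<Longrightarrow> ws!i \<bullet> ws!i > 0"
    using wsorth wsi by (metis conjugate_square_ge_0_vec vec_conjugate_real order_le_less)
  define ns where "ns = map (\<lambda>w. (1 / sqrt (w \<bullet> w)) \<cdot>\<^sub>v w) ws"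
  have len_ns: "length ns = ?n" unfolding ns_def using len_ws by simp
  have nsi: "\<And>i. i < ?n \<Longrightarrow> ns ! i \<in> carrier_vec ?n" unfolding ns_def using wsi len_ws by simp
  have nsorth: "\<And>i j. i < ?n \<Longrightarrow> j < ?n \<Longrightarrow> ns!i \<bullet> ns!j = (if i = j then 1 else 0)"
  proof -
    fix i j assume i: "i < ?n" and j: "j < ?n"
    have "ns!i \<bullet> ns!j = (1 / sqrt (ws!i \<bullet> ws!i)) * (1 / sqrt (ws!j \<bullet> ws!j)) * (ws!i \<bullet> ws!j)"
      unfolding ns_def using i j len_ws wsi[OF i] wsi[OF j] by simp
    thus "ns!i \<bullet> ns!j = (if i = j then 1 else 0)"
      using wsorth[OF i j] wspos[OF i] by (auto simp: real_sqrt_mult[symmetric])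
  qed
  have ns0: "ns ! 0 = u" unfolding ns_def using ws0 uu len_ws by simp
  define W where "W = mat_of_cols ?n ns"
  have W: "W \<in> carrier_mat ?n ?n" unfolding W_def using len_ns by (metis mat_of_cols_carrier(1))
  have colW: "\<And>i. i < ?n \<Longrightarrow> col W i = ns ! i" unfolding W_def using len_ns nsi by simp
  have WtW: "transpose_mat W * W = 1\<^sub>m ?n"
    by (rule eq_matI, insert W, auto simp: colW nsorth)
  define A' where "A' = transpose_mat W * A * W"
  have A'C: "A' \<in> carrier_mat ?n ?n" unfolding A'_def using W A by auto
  have A'e: "\<And>i j. i < ?n \<Longrightarrow> j < ?n \<Longrightarrow> A' $$ (i,j) = ns!i \<bullet> (A *\<^sub>v ns!j)"
  proof -
    fix i j assume i: "i < ?n" and j: "j < ?n"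
    have "A' = transpose_mat W * (A * W)" unfolding A'_def using W A by (simp add: assoc_mult_mat[of _ ?n ?n _ ?n _ ?n])
    have "(transpose_mat W * (A * W)) $$ (i,j) = row (transpose_mat W) i \<bullet> col (A * W) j"
      using i j W A by (intro index_mult_mat(1)) auto
    also have "row (transpose_mat W) i = ns!i" using i W colW[OF i] by simp
    also have "col (A * W) j = A *\<^sub>v ns!j" using col_mult2[OF A W j] colW[OF j] by simp
    finally show "A' $$ (i,j) = ns!i \<bullet> (A *\<^sub>v ns!j)" using \<open>A' = transpose_mat W * (A * W)\<close> by simp
  qed
  have A'T: "transpose_mat A' = A'"
  proof -
    have WA: "transpose_mat W * A \<in> carrier_mat ?n ?n" using W A by simp
    have "transpose_mat A' = transpose_mat W * transpose_mat (transpose_mat W * A)"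
      unfolding A'_def by (rule transpose_mult[OF WA W])
    also have "transpose_mat (transpose_mat W * A) = transpose_mat A * W"
      using transpose_mult[of "transpose_mat W" ?n ?n A ?n] W A by simp
    also have "transpose_mat W * (transpose_mat A * W) = A'"
      unfolding A'_def sym using W A by (simp add: assoc_mult_mat[of _ ?n ?n _ ?n _ ?n])
    finally show ?thesis .
  qed
  have A'sym: "\<And>i j. i < ?n \<Longrightarrow> j < ?n \<Longrightarrow> A'$$(i,j) = A'$$(j,i)"
    using A'T A'C by (metis index_transpose_mat(1) carrier_matD(1) carrier_matD(2))
  have A'0: "\<And>i. i < ?n \<Longrightarrow> A'$$(i,0) = (if i = 0 then e else 0)"
  proof -
    fix i assume i: "i < ?n"
    have "A'$$(i,0) = ns!i \<bullet> (e \<cdot>\<^sub>v ns!0)" using A'e[OF i] ns0 Au by simp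
    also have "\<dots> = e * (ns!i \<bullet> ns!0)" using nsi[OF i] nsi[of 0] by simp
    finally show "A'$$(i,0) = (if i = 0 then e else 0)" using nsorth[OF i, of 0] by simp
  qed
  define A3 where "A3 = mat k k (\<lambda>(i,j). A'$$(Suc i, Suc j))"
  have A3C: "A3 \<in> carrier_mat k k" unfolding A3_def by simp
  have A3T: "transpose_mat A3 = A3" unfolding A3_def by (rule eq_matI, auto simp: A'sym)
  from Suc.IH[OF A3C A3T] obtain Q3 ds3 where Q3: "Q3 \<in> carrier_mat k k"
    and Q3o: "transpose_mat Q3 * Q3 = 1\<^sub>m k" and ds3: "length ds3 = k"
    and Q3d: "transpose_mat Q3 * A3 * Q3 = diagm ds3" by blast
  define Q1 where "Q1 = four_block_mat (1\<^sub>m 1) (0\<^sub>m 1 k) (0\<^sub>m k 1) Q3"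
  have Q1: "Q1 \<in> carrier_mat ?n ?n" unfolding Q1_def using Q3 by auto
  have A'blk: "A' = four_block_mat (mat 1 1 (\<lambda>_. e)) (0\<^sub>m 1 k) (0\<^sub>m k 1) A3"
    by (rule eq_matI, insert A'C A'0 A'sym, auto simp: A3_def)
  have Q1t: "transpose_mat Q1 = four_block_mat (1\<^sub>m 1) (0\<^sub>m 1 k) (0\<^sub>m k 1) (transpose_mat Q3)"
    unfolding Q1_def transpose_four_block_mat[OF one_carrier_mat zero_carrier_mat zero_carrier_mat Q3] by simp
  have Q3t: "transpose_mat Q3 \<in> carrier_mat k k" using Q3 by simp
  have Q1tQ1: "transpose_mat Q1 * Q1 = 1\<^sub>m ?n"
    unfolding Q1t
    apply (subst Q1_def)
    apply (subst mult_four_block_mat[OF one_carrier_mat zero_carrier_mat zero_carrier_mat Q3t one_carrier_mat zero_carrier_mat zero_carrier_mat Q3])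
    using Q3 Q3o four_block_one_mat[of 1 k] by simp
  have A'Q1: "transpose_mat Q1 * A' * Q1 = diagm (e # ds3)"
    unfolding Q1t A'blk
    apply (subst mult_four_block_mat[OF one_carrier_mat zero_carrier_mat zero_carrier_mat Q3t _ zero_carrier_mat zero_carrier_mat A3C])
    apply simp
    apply (subst Q1_def)
    apply (subst mult_four_block_mat[OF _ _ _ _ one_carrier_mat zero_carrier_mat zero_carrier_mat Q3])
    using Q3 A3C
    apply (auto simp: Q3d[symmetric])[4]
    apply (rule eq_matI)
    using Q3 A3C ds3 Q3d
    apply (auto simp: diagm_def)
    done
  have QC: "W * Q1 \<in> carrier_mat ?n ?n" using W Q1 by simp
  have Qt: "transpose_mat (W * Q1) = transpose_mat Q1 * transpose_mat W"
    by (rule transpose_mult[OF W Q1])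
  have Q1t: "transpose_mat Q1 \<in> carrier_mat ?n ?n" "transpose_mat W \<in> carrier_mat ?n ?n"
    using Q1 W by auto
  have "transpose_mat (W * Q1) * (W * Q1) = transpose_mat Q1 * ((transpose_mat W * W) * Q1)"
    unfolding Qt using assoc_mult_mat[OF Q1t(1) Q1t(2), of "W * Q1" ?n] 
      assoc_mult_mat[OF Q1t(2) W Q1] W Q1 by simp
  also have "\<dots> = 1\<^sub>m ?n" using WtW Q1 Q1tQ1 by simp
  finally have QtQ: "transpose_mat (W * Q1) * (W * Q1) = 1\<^sub>m ?n" .
  have "transpose_mat (W * Q1) * A * (W * Q1) = transpose_mat Q1 * A' * Q1"
  proof -
    have c1: "transpose_mat Q1 * transpose_mat W \<in> carrier_mat ?n ?n" using Q1t by simp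
    have "transpose_mat Q1 * transpose_mat W * A * (W * Q1) = transpose_mat Q1 * transpose_mat W * A * W * Q1"
      using assoc_mult_mat[of "transpose_mat Q1 * transpose_mat W * A" ?n ?n W ?n Q1 ?n] c1 A W Q1 by simp
    also have "\<dots> = transpose_mat Q1 * A' * Q1" unfolding A'_def
      using assoc_mult_mat[OF Q1t] A W Q1 Q1t by (simp add: assoc_mult_mat[of _ ?n ?n _ ?n _ ?n])
    finally show ?thesis unfolding Qt .
  qed
  hence "transpose_mat (W * Q1) * A * (W * Q1) = diagm (e # ds3)" using A'Q1 by simp
  thus ?case using QC QtQ ds3 by (intro exI[of _ "W * Q1"] exI[of _ "e # ds3"]) auto
qed




lemma order_lin: "Polynomial.order x [:-a, 1:] = (if x = a then 1 else (0::nat))" for x a :: real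
proof (cases "x = a")
  case True thus ?thesis using order_power_n_n[of a 1] by simp
next
  case False
  have "poly [:-a,1:] x \<noteq> 0" using False by simp
  thus ?thesis using False order_root[of "[:-a,1:]" x] by auto
qed

lemma order_prod_lin: "Polynomial.order x (\<Prod>a\<leftarrow>ds. [:-a, 1:]) = length (filter ((=) x) ds)" for x :: real
proof -
  have "Polynomial.order x (\<Prod>a\<leftarrow>ds. [:-a, 1:]) = sum_list (map (Polynomial.order x) (map (\<lambda>a. [:-a, 1:]) ds))"
    by (rule order_prod_list) auto
  also have "\<dots> = length (filter ((=) x) ds)"
    by (induct ds) (auto simp: order_lin)
  finally show ?thesis .
qed

lemma sum_len_filter: "finite X \<Longrightarrow> (\<Sum>x\<in>X. length (filter ((=) x) ds)) = length (filter (\<lambda>a. a \<in> X) ds)"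
proof (induct ds)
  case Nil thus ?case by simp
next
  case (Cons a ds)
  have "(\<Sum>x\<in>X. length (filter ((=) x) (a # ds))) = (\<Sum>x\<in>X. (if x = a then 1 else 0) + length (filter ((=) x) ds))"
    by (intro sum.cong) auto
  also have "\<dots> = (\<Sum>x\<in>X. (if x = a then 1 else 0)) + (\<Sum>x\<in>X. length (filter ((=) x) ds))"
    by (rule sum.distrib)
  also have "(\<Sum>x\<in>X. (if x = a then 1 else (0::nat))) = (if a \<in> X then 1 else 0)"
    using Cons.prems by (simp add: sum.delta')
  finally show ?case using Cons by simp
qed

lemma count_roots_prod: fixes ds :: "real list"
  shows "(\<Sum>x\<in>{x\<in>I. poly (\<Prod>a\<leftarrow>ds. [:-a, 1:]) x = 0}. Polynomial.order x (\<Prod>a\<leftarrow>ds. [:-a, 1:]))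
    = card {i. i < length ds \<and> ds!i \<in> I}"
proof -
  have roots: "{x\<in>I. poly (\<Prod>a\<leftarrow>ds. [:-a, 1:]) x = 0} = {x\<in>I. x \<in> set ds}"
    by (auto simp: poly_prod_list_zero_iff)
  have "length (filter (\<lambda>a. a \<in> {x\<in>I. x \<in> set ds}) ds) = length (filter (\<lambda>a. a \<in> I) ds)"
    by (metis (mono_tags, lifting) filter_cong mem_Collect_eq)
  thus ?thesis unfolding roots order_prod_lin
    by (subst sum_len_filter) (auto simp: length_filter_conv_card)
qed

definition spec :: "nat \<Rightarrow> real mat \<Rightarrow> real mat \<Rightarrow> real list \<Rightarrow> bool" where
  "spec n A Q ds \<longleftrightarrow> Q \<in> carrier_mat n n \<and> transpose_mat Q * Q = 1\<^sub>m n \<and> length ds = n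
      \<and> transpose_mat Q * A * Q = diagm ds"

lemma spec_charpoly: assumes A: "A \<in> carrier_mat n n" and sp: "spec n A Q ds"
  shows "char_poly A = (\<Prod>a\<leftarrow>ds. [:-a, 1:])"
proof -
  from sp have Q: "Q \<in> carrier_mat n n" and QtQ: "transpose_mat Q * Q = 1\<^sub>m n" and len: "length ds = n"
    and D: "transpose_mat Q * A * Q = diagm ds" unfolding spec_def by auto
  have Qt: "transpose_mat Q \<in> carrier_mat n n" using Q by simp
  have QQt: "Q * transpose_mat Q = 1\<^sub>m n" by (rule mat_mult_left_right_inverse[OF Qt Q QtQ])
  have DC: "diagm ds \<in> carrier_mat n n" using len by (simp add: diagm_def)
  have "Q * diagm ds * transpose_mat Q = (Q * transpose_mat Q) * A * (Q * transpose_mat Q)"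
    unfolding D[symmetric] using Q Qt A by (simp add: assoc_mult_mat[of _ n n _ n _ n])
  also have "\<dots> = A" using QQt A by simp
  finally have AQ: "A = Q * diagm ds * transpose_mat Q" by simp
  have "similar_mat A (diagm ds)" unfolding similar_mat_def similar_mat_wit_def
    using Q Qt A DC QtQ QQt AQ by (intro exI[of _ Q] exI[of _ "transpose_mat Q"]) (auto simp: Let_def)
  hence "char_poly A = char_poly (diagm ds)" by (rule char_poly_similar)
  also have "\<dots> = (\<Prod>a\<leftarrow>diag_mat (diagm ds). [:-a, 1:])"
    by (rule char_poly_upper_triangular[OF DC]) (auto simp: diagm_def len)
  also have "diag_mat (diagm ds) = ds" unfolding diag_mat_def diagm_def
    by (rule nth_equalityI) auto
  finally show ?thesis .
qed




lemma hom_sys: fixes M :: "nat \<Rightarrow> nat \<Rightarrow> real"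
  assumes S: "finite S" and k: "card S < k"
  shows "\<exists>c. (\<exists>j<k. c j \<noteq> 0) \<and> (\<forall>i\<in>S. (\<Sum>j<k. M i j * c j) = 0)"
proof -
  obtain h where h: "bij_betw h {0..<card S} S" using ex_bij_betw_nat_finite[OF S] by blast
  define B where "B = mat k k (\<lambda>(r,j). if r < card S then M (h r) j else 0)"
  have BC: "B \<in> carrier_mat k k" unfolding B_def by simp
  have "B = mat\<^sub>r k k (\<lambda>r. if r = k - 1 then 0\<^sub>v k else vec k (\<lambda>j. if r < card S then M (h r) j else 0))"
    unfolding B_def using k by (intro eq_matI) auto
  also have "det \<dots> = 0" using k by (intro det_row_0) auto
  finally have "det B = 0" .
  then obtain v where v: "v \<in> carrier_vec k" "v \<noteq> 0\<^sub>v k" "B *\<^sub>v v = 0\<^sub>v k"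
    using det_0_iff_vec_prod_zero_field[OF BC] by blast
  obtain j where j: "j < k" "v $ j \<noteq> 0" using v(1,2) by (metis eq_vecI carrier_vecD index_zero_vec(1) index_zero_vec(2))
  have "\<forall>i\<in>S. (\<Sum>j<k. M i j * v $ j) = 0"
  proof
    fix i assume i: "i \<in> S"
    have "i \<in> h ` {0..<card S}" using h i by (simp add: bij_betw_def)
    then obtain r where r: "r < card S" "i = h r" by auto
    have "(B *\<^sub>v v) $ r = 0" using v(3) r k by simp
    moreover have "(B *\<^sub>v v) $ r = (\<Sum>j<k. M i j * v $ j)"
      using r k v(1) unfolding B_def by (auto simp: scalar_prod_def lessThan_atLeast0 intro!: sum.cong)
    ultimately show "(\<Sum>j<k. M i j * v $ j) = 0" by simp
  qed
  thus ?thesis using j by (intro exI[of _ "\<lambda>j. v $ j"]) auto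
qed

lemma scalar_transpose: fixes M :: "real mat"
  assumes M: "M \<in> carrier_mat n n" and x: "x \<in> carrier_vec n" and y: "y \<in> carrier_vec n"
  shows "x \<bullet> (M *\<^sub>v y) = (transpose_mat M *\<^sub>v x) \<bullet> y"
proof -
  have "x \<bullet> (M *\<^sub>v y) = (\<Sum>i<n. x $ i * (\<Sum>j<n. M $$ (i,j) * y $ j))"
    using M x y by (auto simp: scalar_prod_def lessThan_atLeast0 intro!: sum.cong)
  also have "\<dots> = (\<Sum>i<n. \<Sum>j<n. x $ i * M $$ (i,j) * y $ j)"
    by (simp add: sum_distrib_left mult.assoc)
  also have "\<dots> = (\<Sum>j<n. \<Sum>i<n. x $ i * M $$ (i,j) * y $ j)" by (rule sum.swap)
  also have "\<dots> = (transpose_mat M *\<^sub>v x) \<bullet> y"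
    using M x y by (auto simp: scalar_prod_def lessThan_atLeast0 sum_distrib_right intro!: sum.cong)
  finally show ?thesis .
qed

lemma spec_quad: fixes A :: "real mat"
  assumes A: "A \<in> carrier_mat n n" and sp: "spec n A Q ds" and x: "x \<in> carrier_vec n"
  defines "z \<equiv> transpose_mat Q *\<^sub>v x"
  shows "x \<bullet> (A *\<^sub>v x) = (\<Sum>i<n. ds!i * (z$i)^2)" and "x \<bullet> x = (\<Sum>i<n. (z$i)^2)"
proof -
  from sp have Q: "Q \<in> carrier_mat n n" and QtQ: "transpose_mat Q * Q = 1\<^sub>m n" and len: "length ds = n"
    and D: "transpose_mat Q * A * Q = diagm ds" unfolding spec_def by auto
  have Qt: "transpose_mat Q \<in> carrier_mat n n" using Q by simp
  have QQt: "Q * transpose_mat Q = 1\<^sub>m n" by (rule mat_mult_left_right_inverse[OF Qt Q QtQ])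
  have DC: "diagm ds \<in> carrier_mat n n" using len by (simp add: diagm_def)
  have zC: "z \<in> carrier_vec n" unfolding z_def using Qt x by simp
  have "Q * diagm ds * transpose_mat Q = (Q * transpose_mat Q) * A * (Q * transpose_mat Q)"
    unfolding D[symmetric] using Q Qt A by (simp add: assoc_mult_mat[of _ n n _ n _ n])
  also have "\<dots> = A" using QQt A by simp
  finally have AQ: "A = Q * diagm ds * transpose_mat Q" by simp
  have "A *\<^sub>v x = Q *\<^sub>v (diagm ds *\<^sub>v z)" unfolding AQ z_def using Q Qt DC x
    by (simp add: assoc_mult_mat_vec[of _ n n _ n])
  hence "x \<bullet> (A *\<^sub>v x) = z \<bullet> (diagm ds *\<^sub>v z)"
    using scalar_transpose[OF Q x, of "diagm ds *\<^sub>v z"] DC zC unfolding z_def by simp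
  also have "\<dots> = (\<Sum>i<n. ds!i * (z$i)^2)"
  proof -
    have e: "\<And>i. i < n \<Longrightarrow> (diagm ds *\<^sub>v z) $ i = ds!i * z$i"
    proof -
      fix i assume i: "i < n"
      have "(diagm ds *\<^sub>v z) $ i = (\<Sum>j\<in>{0..<n}. (if i = j then ds!i else 0) * z$j)"
        using i zC len unfolding diagm_def by (auto simp: scalar_prod_def intro!: sum.cong)
      also have "\<dots> = (\<Sum>j\<in>{0..<n}. (if i = j then ds!i * z$j else 0))"
        by (intro sum.cong) auto
      also have "\<dots> = ds!i * z$i" using i by (simp add: sum.delta)
      finally show "(diagm ds *\<^sub>v z) $ i = ds!i * z$i" .
    qed
    have dd: "dim_vec (diagm ds *\<^sub>v z) = n" using DC by simp
    have "z \<bullet> (diagm ds *\<^sub>v z) = (\<Sum>i\<in>{0..<n}. z$i * (diagm ds *\<^sub>v z)$i)"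
      unfolding scalar_prod_def dd ..
    also have "\<dots> = (\<Sum>i\<in>{0..<n}. ds!i * (z$i)^2)"
      by (intro sum.cong refl, simp only: e atLeastLessThan_iff, simp add: power2_eq_square)
    finally show ?thesis by (simp add: lessThan_atLeast0)
  qed
  finally show "x \<bullet> (A *\<^sub>v x) = (\<Sum>i<n. ds!i * (z$i)^2)" .
  have "x = Q *\<^sub>v z" unfolding z_def using Q Qt x QQt by (simp add: assoc_mult_mat_vec[symmetric, of _ n n _ n])
  hence "x \<bullet> x = x \<bullet> (Q *\<^sub>v z)" by simp
  also have "\<dots> = z \<bullet> z" using scalar_transpose[OF Q x zC] unfolding z_def by simp
  also have "\<dots> = (\<Sum>i<n. (z$i)^2)" using zC by (simp add: scalar_prod_def lessThan_atLeast0 power2_eq_square)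
  finally show "x \<bullet> x = (\<Sum>i<n. (z$i)^2)" .
qed




definition lc :: "nat \<Rightarrow> nat \<Rightarrow> (nat \<Rightarrow> real) \<Rightarrow> (nat \<Rightarrow> nat \<Rightarrow> real) \<Rightarrow> real vec" where
  "lc n k c Y = vec n (\<lambda>l. \<Sum>j<k. c j * Y j l)"

lemma cf_core: fixes A :: "real mat"
  assumes A: "A \<in> carrier_mat n n" and sp: "spec n A Q ds"
    and S: "S \<subseteq> {..<n}" and k: "card S < k"
  shows "\<exists>c. (\<exists>j<k. c j \<noteq> 0) \<and> (\<forall>i\<in>S. (transpose_mat Q *\<^sub>v lc n k c Y) $ i = 0)"
proof -
  from sp have Q: "Q \<in> carrier_mat n n" unfolding spec_def by auto
  have fS: "finite S" using S finite_subset by blast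
  obtain c where c: "\<exists>j<k. c j \<noteq> 0" and sol: "\<forall>i\<in>S. (\<Sum>j<k. (\<Sum>l<n. Q $$ (l,i) * Y j l) * c j) = 0"
    using hom_sys[OF fS k, of "\<lambda>i j. \<Sum>l<n. Q $$ (l,i) * Y j l"] by blast
  have "\<forall>i\<in>S. (transpose_mat Q *\<^sub>v lc n k c Y) $ i = 0"
  proof
    fix i assume i: "i \<in> S"
    hence i': "i < n" using S by auto
    have "(transpose_mat Q *\<^sub>v lc n k c Y) $ i = (\<Sum>l<n. Q $$ (l,i) * (\<Sum>j<k. c j * Y j l))"
      using i' Q by (auto simp: lc_def scalar_prod_def lessThan_atLeast0 intro!: sum.cong)
    also have "\<dots> = (\<Sum>l<n. \<Sum>j<k. Q $$ (l,i) * Y j l * c j)"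
      by (simp add: sum_distrib_left mult.commute mult.left_commute)
    also have "\<dots> = (\<Sum>j<k. \<Sum>l<n. Q $$ (l,i) * Y j l * c j)" by (rule sum.swap)
    also have "\<dots> = (\<Sum>j<k. (\<Sum>l<n. Q $$ (l,i) * Y j l) * c j)" by (simp add: sum_distrib_right)
    also have "\<dots> = 0" using sol i by simp
    finally show "(transpose_mat Q *\<^sub>v lc n k c Y) $ i = 0" .
  qed
  thus ?thesis using c by blast
qed

lemma lc_nonzero: assumes indep: "\<And>c. (\<forall>l<n. (\<Sum>j<k. c j * Y j l) = 0) \<Longrightarrow> \<forall>j<k. c j = 0"
  and c: "\<exists>j<k. c j \<noteq> 0"
  shows "lc n k c Y \<noteq> 0\<^sub>v n"
proof
  assume "lc n k c Y = 0\<^sub>v n"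
  hence "\<forall>l<n. (\<Sum>j<k. c j * Y j l) = 0" unfolding lc_def
    by (metis index_vec index_zero_vec(1))
  thus False using indep c by blast
qed

lemma cf_le: fixes A :: "real mat"
  assumes A: "A \<in> carrier_mat n n" and sp: "spec n A Q ds"
    and indep: "\<And>c. (\<forall>l<n. (\<Sum>j<k. c j * Y j l) = 0) \<Longrightarrow> \<forall>j<k. c j = 0"
    and bound: "\<And>c. lc n k c Y \<bullet> (A *\<^sub>v lc n k c Y) \<le> t * (lc n k c Y \<bullet> lc n k c Y)"
  shows "k \<le> card {i. i < n \<and> ds!i \<le> t}"
proof (rule ccontr)
  let ?S = "{i. i < n \<and> ds!i \<le> t}"
  assume "\<not> ?thesis"
  hence k: "card ?S < k" by simp
  obtain c where c: "\<exists>j<k. c j \<noteq> 0" and z0: "\<forall>i\<in>?S. (transpose_mat Q *\<^sub>v lc n k c Y) $ i = 0"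
    using cf_core[OF A sp _ k, of Y] by auto
  define x where "x = lc n k c Y"
  define z where "z = transpose_mat Q *\<^sub>v x"
  have xC: "x \<in> carrier_vec n" unfolding x_def lc_def by simp
  have x0: "x \<noteq> 0\<^sub>v n" unfolding x_def by (rule lc_nonzero[OF indep c])
  have q1: "x \<bullet> (A *\<^sub>v x) = (\<Sum>i<n. ds!i * (z$i)^2)" and q2: "x \<bullet> x = (\<Sum>i<n. (z$i)^2)"
    using spec_quad[OF A sp xC] unfolding z_def by auto
  have "x \<bullet> x > 0" using real_sq_pos[OF xC x0] .
  then obtain i where i: "i < n" "(z$i)^2 \<noteq> 0" unfolding q2
    by (metis (no_types, lifting) less_irrefl sum.neutral lessThan_iff)
  have iS: "i \<notin> ?S" using z0 i unfolding z_def x_def by auto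
  have "(\<Sum>i<n. (ds!i - t) * (z$i)^2) > 0"
  proof (rule sum_pos2[of _ i])
    show "(ds!i - t) * (z$i)^2 > 0" using iS i by auto
    show "\<And>j. j \<in> {..<n} \<Longrightarrow> 0 \<le> (ds!j - t) * (z$j)^2"
    proof -
      fix j assume j: "j \<in> {..<n}"
      show "0 \<le> (ds!j - t) * (z$j)^2"
      proof (cases "j \<in> ?S")
        case True thus ?thesis using z0 unfolding z_def x_def by auto
      next
        case False thus ?thesis using j by auto
      qed
    qed
  qed (use i in auto)
  hence "x \<bullet> (A *\<^sub>v x) > t * (x \<bullet> x)" unfolding q1 q2
    by (simp add: algebra_simps sum_subtractf sum_distrib_left)
  thus False using bound[of c] unfolding x_def by simp
qed

lemma cf_gt: fixes A :: "real mat"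
  assumes A: "A \<in> carrier_mat n n" and sp: "spec n A Q ds"
    and indep: "\<And>c. (\<forall>l<n. (\<Sum>j<k. c j * Y j l) = 0) \<Longrightarrow> \<forall>j<k. c j = 0"
    and bound: "\<And>c. lc n k c Y \<noteq> 0\<^sub>v n \<Longrightarrow> lc n k c Y \<bullet> (A *\<^sub>v lc n k c Y) > t * (lc n k c Y \<bullet> lc n k c Y)"
  shows "k \<le> card {i. i < n \<and> t < ds!i}"
proof (rule ccontr)
  let ?S = "{i. i < n \<and> t < ds!i}"
  assume "\<not> ?thesis"
  hence k: "card ?S < k" by simp
  obtain c where c: "\<exists>j<k. c j \<noteq> 0" and z0: "\<forall>i\<in>?S. (transpose_mat Q *\<^sub>v lc n k c Y) $ i = 0"
    using cf_core[OF A sp _ k, of Y] by auto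
  define x where "x = lc n k c Y"
  define z where "z = transpose_mat Q *\<^sub>v x"
  have xC: "x \<in> carrier_vec n" unfolding x_def lc_def by simp
  have x0: "x \<noteq> 0\<^sub>v n" unfolding x_def by (rule lc_nonzero[OF indep c])
  have q1: "x \<bullet> (A *\<^sub>v x) = (\<Sum>i<n. ds!i * (z$i)^2)" and q2: "x \<bullet> x = (\<Sum>i<n. (z$i)^2)"
    using spec_quad[OF A sp xC] unfolding z_def by auto
  have "(\<Sum>i<n. (ds!i - t) * (z$i)^2) \<le> 0"
  proof (rule sum_nonpos)
    fix j assume j: "j \<in> {..<n}"
    show "(ds!j - t) * (z$j)^2 \<le> 0"
    proof (cases "j \<in> ?S")
      case True thus ?thesis using z0 unfolding z_def x_def by auto
    next
      case False thus ?thesis using j by (auto intro: mult_nonpos_nonneg)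
    qed
  qed
  hence "x \<bullet> (A *\<^sub>v x) \<le> t * (x \<bullet> x)" unfolding q1 q2
    by (simp add: algebra_simps sum_subtractf sum_distrib_left)
  thus False using bound[of c] x0 unfolding x_def by simp
qed




definition qf :: "nat \<Rightarrow> (nat \<Rightarrow> nat \<Rightarrow> bool) \<Rightarrow> real vec \<Rightarrow> real" where
  "qf n E x = (\<Sum>i<n. \<Sum>j<n. if E i j then (x$i - x$j)^2 else 0)"

lemma lap_carrier: "laplacian n E \<in> carrier_mat n n"
  unfolding laplacian_def by simp

lemma lap_sym: assumes "simple_graph n E" shows "transpose_mat (laplacian n E) = laplacian n E"
  using assms unfolding laplacian_def simple_graph_def by (intro eq_matI) auto

lemma card_deg: "real (card {k. k < n \<and> E i k}) = (\<Sum>j<n. if E i j then 1 else 0)" for E :: "nat \<Rightarrow> nat \<Rightarrow> bool"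
proof -
  have "(\<Sum>j<n. if E i j then 1 else (0::real)) = (\<Sum>j\<in>{j\<in>{..<n}. E i j}. 1)"
    by (rule sum.inter_filter[symmetric]) simp
  also have "\<dots> = real (card {j\<in>{..<n}. E i j})" by simp
  also have "{j\<in>{..<n}. E i j} = {k. k < n \<and> E i k}" by auto
  finally show ?thesis by simp
qed

lemma lap_quad: assumes G: "simple_graph n E" and x: "x \<in> carrier_vec n"
  shows "x \<bullet> (laplacian n E *\<^sub>v x) = qf n E x / 2"
proof -
  have sym: "\<And>i j. i < n \<Longrightarrow> j < n \<Longrightarrow> E i j = E j i" using G unfolding simple_graph_def by blast
  have Lx: "\<And>i. i < n \<Longrightarrow> (laplacian n E *\<^sub>v x) $ i = (\<Sum>j<n. if E i j then x$i - x$j else 0)"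
  proof -
    fix i assume i: "i < n"
    have "(laplacian n E *\<^sub>v x) $ i = (\<Sum>j<n. ((if i = j then real (card {k. k < n \<and> E i k}) else 0) - (if E i j then 1 else 0)) * x$j)"
      using i x unfolding laplacian_def by (auto simp: scalar_prod_def lessThan_atLeast0 intro!: sum.cong)
    also have "\<dots> = (\<Sum>j<n. (if i = j then real (card {k. k < n \<and> E i k}) * x$j else 0)) - (\<Sum>j<n. if E i j then x$j else 0)"
      by (simp add: left_diff_distrib sum_subtractf if_distrib[of "\<lambda>a. a * _"] cong: if_cong)
    also have "(\<Sum>j<n. (if i = j then real (card {k. k < n \<and> E i k}) * x$j else 0)) = real (card {k. k < n \<and> E i k}) * x$i"
      using i by (simp add: sum.delta)
    also have "\<dots> = (\<Sum>j<n. if E i j then x$i else 0)" unfolding card_deg by (simp add: sum_distrib_right if_distrib[of "\<lambda>a. a * _"] cong: if_cong)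
    finally show "(laplacian n E *\<^sub>v x) $ i = (\<Sum>j<n. if E i j then x$i - x$j else 0)"
      by (simp add: sum_subtractf[symmetric] if_distrib[of "\<lambda>a. a - _"] cong: if_cong)
  qed
  have dd: "dim_vec (laplacian n E *\<^sub>v x) = n" unfolding laplacian_def by simp
  have "x \<bullet> (laplacian n E *\<^sub>v x) = (\<Sum>i<n. x$i * (laplacian n E *\<^sub>v x) $ i)"
    unfolding scalar_prod_def dd by (simp add: lessThan_atLeast0)
  also have "\<dots> = (\<Sum>i<n. \<Sum>j<n. if E i j then x$i * x$i - x$i * x$j else 0)"
    by (intro sum.cong refl, simp only: Lx lessThan_iff, simp add: sum_distrib_left right_diff_distrib if_distrib[of "\<lambda>a. _ * a"] cong: if_cong)
  finally have L1: "x \<bullet> (laplacian n E *\<^sub>v x) = (\<Sum>i<n. \<Sum>j<n. if E i j then x$i * x$i - x$i * x$j else 0)" .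
  have sw: "(\<Sum>i<n. \<Sum>j<n. if E i j then x$j * x$j - x$j * x$i else 0) = (\<Sum>i<n. \<Sum>j<n. if E i j then x$i * x$i - x$i * x$j else 0)"
  proof -
    have "(\<Sum>i<n. \<Sum>j<n. if E i j then x$j * x$j - x$j * x$i else 0) = (\<Sum>j<n. \<Sum>i<n. if E i j then x$j * x$j - x$j * x$i else 0)"
      by (rule sum.swap)
    also have "\<dots> = (\<Sum>j<n. \<Sum>i<n. if E j i then x$j * x$j - x$j * x$i else 0)"
      by (intro sum.cong refl) (auto simp: sym)
    finally show ?thesis .
  qed
  have "qf n E x = (\<Sum>i<n. \<Sum>j<n. (if E i j then x$i * x$i - x$i * x$j else 0) + (if E i j then x$j * x$j - x$j * x$i else 0))"
    unfolding qf_def by (intro sum.cong refl) (auto simp: power2_eq_square algebra_simps)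
  also have "\<dots> = 2 * (x \<bullet> (laplacian n E *\<^sub>v x))" unfolding L1 sum.distrib sw by simp
  finally show ?thesis by simp
qed

lemma qf_nonneg: "qf n E x \<ge> 0" unfolding qf_def by (intro sum_nonneg) auto




lemma lap_spec: assumes "simple_graph n E" shows "\<exists>Q ds. spec n (laplacian n E) Q ds"
  using spectral[OF lap_carrier lap_sym[OF assms]] unfolding spec_def by blast

lemma lap_count_spec: assumes sp: "spec n (laplacian n E) Q ds"
  shows "lap_count n E I = card {i. i < n \<and> ds!i \<in> I}"
proof -
  have len: "length ds = n" using sp unfolding spec_def by auto
  show ?thesis unfolding lap_count_def spec_charpoly[OF lap_carrier sp] count_roots_prod len ..
qed

lemma lap_psd: assumes G: "simple_graph n E" and sp: "spec n (laplacian n E) Q ds" and i: "i < n"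
  shows "ds!i \<ge> 0"
proof -
  from sp have Q: "Q \<in> carrier_mat n n" and QtQ: "transpose_mat Q * Q = 1\<^sub>m n"
    unfolding spec_def by auto
  define x where "x = Q *\<^sub>v unit_vec n i"
  have xC: "x \<in> carrier_vec n" unfolding x_def using Q by simp
  have z: "transpose_mat Q *\<^sub>v x = unit_vec n i" unfolding x_def
    using Q QtQ by (simp add: assoc_mult_mat_vec[symmetric, of _ n n _ n])
  have "x \<bullet> (laplacian n E *\<^sub>v x) = (\<Sum>j<n. ds!j * ((unit_vec n i)$j)^2)"
    using spec_quad(1)[OF lap_carrier sp xC] unfolding z .
  also have "\<dots> = (\<Sum>j<n. if j = i then ds!i else 0)"
    by (intro sum.cong) (auto simp: unit_vec_def)
  also have "\<dots> = ds!i" using i by simp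
  finally have "ds!i = qf n E x / 2" using lap_quad[OF G xC] by simp
  thus ?thesis using qf_nonneg[of n E x] by simp
qed




lemma sq_total: fixes f :: "nat \<Rightarrow> real"
  shows "(\<Sum>i<n. \<Sum>j<n. (f i - f j)^2) = 2 * real n * (\<Sum>i<n. (f i)^2) - 2 * (\<Sum>i<n. f i)^2"
proof -
  have "(\<Sum>i<n. \<Sum>j<n. (f i - f j)^2) = (\<Sum>i<n. \<Sum>j<n. (f i)^2 + (f j)^2 - 2 * (f i * f j))"
    by (intro sum.cong refl) (simp add: power2_eq_square algebra_simps)
  also have "\<dots> = (\<Sum>i<n. real n * (f i)^2 + (\<Sum>j<n. (f j)^2) - 2 * (f i * (\<Sum>j<n. f j)))"
    by (simp add: sum.distrib sum_subtractf sum_distrib_left)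
  also have "\<dots> = 2 * real n * (\<Sum>i<n. (f i)^2) - 2 * (\<Sum>i<n. f i)^2"
    by (simp add: sum.distrib sum_subtractf sum_distrib_left[symmetric] sum_distrib_right[symmetric] power2_eq_square algebra_simps)
  finally show ?thesis .
qed

lemma qf_le_pairs: fixes x :: "real vec"
  assumes P: "P \<subseteq> {..<n} \<times> {..<n}" and nE: "\<And>i j. (i,j) \<in> P \<Longrightarrow> \<not> E i j"
  shows "qf n E x \<le> (\<Sum>i<n. \<Sum>j<n. (x$i - x$j)^2) - (\<Sum>p\<in>P. (x$(fst p) - x$(snd p))^2)"
proof -
  let ?A = "{..<n} \<times> {..<n}"
  have fP: "finite P" using P finite_subset by blast
  have "qf n E x = (\<Sum>p\<in>?A. if E (fst p) (snd p) then (x$(fst p) - x$(snd p))^2 else 0)"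
    unfolding qf_def sum.cartesian_product by (simp add: case_prod_beta)
  also have "\<dots> \<le> (\<Sum>p\<in>?A. (x$(fst p) - x$(snd p))^2 - (if p \<in> P then (x$(fst p) - x$(snd p))^2 else 0))"
    by (intro sum_mono) (auto dest: nE)
  also have "\<dots> = (\<Sum>p\<in>?A. (x$(fst p) - x$(snd p))^2) - (\<Sum>p\<in>?A. if p \<in> P then (x$(fst p) - x$(snd p))^2 else 0)"
    by (rule sum_subtractf)
  also have "(\<Sum>p\<in>?A. if p \<in> P then (x$(fst p) - x$(snd p))^2 else 0) = (\<Sum>p\<in>P. (x$(fst p) - x$(snd p))^2)"
  proof -
    have "(\<Sum>p\<in>?A. if p \<in> P then (x$(fst p) - x$(snd p))^2 else 0) = (\<Sum>p\<in>{p\<in>?A. p \<in> P}. (x$(fst p) - x$(snd p))^2)"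
      by (rule sum.inter_filter[symmetric]) simp
    also have "{p\<in>?A. p \<in> P} = P" using P by auto
    finally show ?thesis .
  qed
  also have "(\<Sum>p\<in>?A. (x$(fst p) - x$(snd p))^2) = (\<Sum>i<n. \<Sum>j<n. (x$i - x$j)^2)"
    unfolding sum.cartesian_product by (simp add: case_prod_beta)
  finally show ?thesis .
qed

lemma lower_core: fixes x :: "real vec" and y :: "nat \<Rightarrow> real"
  assumes G: "simple_graph n E" and n: "n \<ge> 2" and xC: "x \<in> carrier_vec n"
    and xy: "\<And>l. l < n \<Longrightarrow> x$l = \<alpha> + y l" and ys: "(\<Sum>l<n. y l) = 0"
    and P: "P \<subseteq> {..<n} \<times> {..<n}" and nE: "\<And>i j. (i,j) \<in> P \<Longrightarrow> \<not> E i j"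
    and yP: "4 * (\<Sum>l<n. (y l)^2) \<le> (\<Sum>p\<in>P. (y (fst p) - y (snd p))^2)"
  shows "x \<bullet> (laplacian n E *\<^sub>v x) \<le> (real n - 2) * (x \<bullet> x)"
proof -
  have xx: "x \<bullet> x = (\<Sum>l<n. (x$l)^2)" using xC by (simp add: scalar_prod_def lessThan_atLeast0 power2_eq_square)
  have s1: "(\<Sum>l<n. x$l) = real n * \<alpha>" using ys by (simp add: xy sum.distrib)
  have s2: "(\<Sum>l<n. (x$l)^2) = real n * \<alpha>^2 + (\<Sum>l<n. (y l)^2)"
  proof -
    have "(\<Sum>l<n. (x$l)^2) = (\<Sum>l<n. \<alpha>^2 + 2 * \<alpha> * y l + (y l)^2)"
      by (intro sum.cong refl) (simp add: xy power2_eq_square algebra_simps)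
    also have "\<dots> = real n * \<alpha>^2 + 2 * \<alpha> * (\<Sum>l<n. y l) + (\<Sum>l<n. (y l)^2)"
      by (simp add: sum.distrib sum_distrib_left)
    finally show ?thesis using ys by simp
  qed
  have sP: "(\<Sum>p\<in>P. (x$(fst p) - x$(snd p))^2) = (\<Sum>p\<in>P. (y (fst p) - y (snd p))^2)"
    using P by (intro sum.cong refl) (auto simp: xy)
  have "qf n E x \<le> 2 * real n * (\<Sum>l<n. (x$l)^2) - 2 * (\<Sum>l<n. x$l)^2 - (\<Sum>p\<in>P. (y (fst p) - y (snd p))^2)"
    using qf_le_pairs[OF P nE, where x = x] sq_total[where f = "\<lambda>l. x$l" and n = n] sP by simp
  also have "\<dots> = 2 * real n * (\<Sum>l<n. (y l)^2) - (\<Sum>p\<in>P. (y (fst p) - y (snd p))^2)"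
    unfolding s1 s2 by (simp add: power2_eq_square algebra_simps)
  finally have q: "qf n E x \<le> 2 * real n * (\<Sum>l<n. (y l)^2) - (\<Sum>p\<in>P. (y (fst p) - y (snd p))^2)" .
  have nn: "real n - 2 \<ge> 0" using n by simp
  have "(real n - 2) * (real n * \<alpha>^2) \<ge> 0" using nn by simp
  hence "qf n E x / 2 \<le> (real n - 2) * (\<Sum>l<n. (x$l)^2)"
    using q yP unfolding s2 by (simp add: algebra_simps)
  thus ?thesis using lap_quad[OF G xC] xx by simp
qed

lemma upper_core: fixes x :: "real vec"
  assumes G: "simple_graph n E" and x0: "x0 < n" and xC: "x \<in> carrier_vec n"
    and star: "\<And>i j. i < n \<Longrightarrow> j < n \<Longrightarrow> i \<noteq> j \<Longrightarrow> \<not> E i j \<Longrightarrow> i = x0 \<or> j = x0"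
    and xx0: "x$x0 = 0" and xs: "(\<Sum>l<n. x$l) = 0" and nz: "x \<noteq> 0\<^sub>v n"
  shows "x \<bullet> (laplacian n E *\<^sub>v x) > (real n - 2) * (x \<bullet> x)"
proof -
  have xx: "x \<bullet> x = (\<Sum>l<n. (x$l)^2)" using xC by (simp add: scalar_prod_def lessThan_atLeast0 power2_eq_square)
  have pos: "x \<bullet> x > 0" using real_sq_pos[OF xC nz] .
  let ?f = "\<lambda>i j. (x$i - x$j)^2"
  have "(\<Sum>i<n. \<Sum>j<n. ?f i j) - (\<Sum>i<n. \<Sum>j<n. (if i = x0 then ?f i j else 0) + (if j = x0 then ?f i j else 0))
      \<le> qf n E x"
    unfolding qf_def sum_subtractf[symmetric]
  proof (intro sum_mono)
    fix i j assume i: "i \<in> {..<n}" and j: "j \<in> {..<n}"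
    show "?f i j - ((if i = x0 then ?f i j else 0) + (if j = x0 then ?f i j else 0)) \<le> (if E i j then ?f i j else 0)"
      using star[of i j] i j by (cases "i = j") auto
  qed
  also have "(\<Sum>i<n. \<Sum>j<n. (if i = x0 then ?f i j else 0) + (if j = x0 then ?f i j else 0))
     = (\<Sum>j<n. ?f x0 j) + (\<Sum>i<n. ?f i x0)"
  proof -
    have "(\<Sum>i<n. \<Sum>j<n. (if i = x0 then ?f i j else 0) + (if j = x0 then ?f i j else 0))
      = (\<Sum>i<n. (\<Sum>j<n. if i = x0 then ?f i j else 0)) + (\<Sum>i<n. \<Sum>j<n. if j = x0 then ?f i j else 0)"
      by (simp add: sum.distrib)
    also have "(\<Sum>i<n. (\<Sum>j<n. if i = x0 then ?f i j else 0)) = (\<Sum>i<n. if i = x0 then (\<Sum>j<n. ?f i j) else 0)"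
      by (intro sum.cong) auto
    also have "\<dots> = (\<Sum>j<n. ?f x0 j)" using x0 by (simp add: sum.delta')
    also have "(\<Sum>i<n. \<Sum>j<n. if j = x0 then ?f i j else 0) = (\<Sum>i<n. ?f i x0)"
      using x0 by (simp add: sum.delta')
    finally show ?thesis .
  qed
  finally have q: "(\<Sum>i<n. \<Sum>j<n. ?f i j) - ((\<Sum>j<n. ?f x0 j) + (\<Sum>i<n. ?f i x0)) \<le> qf n E x" .
  have "(\<Sum>j<n. ?f x0 j) = (\<Sum>l<n. (x$l)^2)" "(\<Sum>i<n. ?f i x0) = (\<Sum>l<n. (x$l)^2)"
    using xx0 by (auto intro!: sum.cong simp: power2_eq_square)
  hence "2 * real n * (\<Sum>l<n. (x$l)^2) - 2 * (\<Sum>l<n. (x$l)^2) \<le> qf n E x"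
    using q sq_total[where f = "\<lambda>l. x$l" and n = n] xs by simp
  hence "(real n - 1) * (x \<bullet> x) \<le> x \<bullet> (laplacian n E *\<^sub>v x)"
    using lap_quad[OF G xC] xx by (simp add: algebra_simps)
  thus ?thesis using pos by (simp add: algebra_simps)
qed




definition ind :: "nat \<Rightarrow> nat \<Rightarrow> real" where "ind a l = (if l = a then 1 else 0)"

lemma sum_ind: "a < n \<Longrightarrow> (\<Sum>l<n. ind a l) = 1" unfolding ind_def by simp

lemma lower3: assumes G: "simple_graph n E" and sp: "spec n (laplacian n E) Q ds"
  and v: "a < n" "b < n" "p < n" "q < n"
  and d: "a \<noteq> b" "a \<noteq> p" "a \<noteq> q" "b \<noteq> p" "b \<noteq> q" "p \<noteq> q"
  and ne: "\<not> E a b" "\<not> E p q"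
  shows "3 \<le> card {i. i < n \<and> ds!i \<le> real n - 2}"
proof -
  define Y where "Y = (\<lambda>(j::nat) (l::nat). if j = 0 then 1 else if j = 1 then ind a l - ind b l else ind p l - ind q l)"
  have s3: "\<And>f. (\<Sum>j<(3::nat). f j) = f 0 + f 1 + (f 2 :: real)" by (simp add: numeral_3_eq_3 numeral_2_eq_2 add.commute add.left_commute)
  have sym: "\<And>i j. i < n \<Longrightarrow> j < n \<Longrightarrow> E i j = E j i" using G unfolding simple_graph_def by blast
  show ?thesis
  proof (rule cf_le[OF lap_carrier sp, where Y = Y])
    fix c assume h: "\<forall>l<n. (\<Sum>j<3. c j * Y j l) = 0"
    have "c 0 + c 1 = 0" using h[rule_format, OF v(1)] d unfolding s3 Y_def ind_def by auto
    moreover have "c 0 - c 1 = 0" using h[rule_format, OF v(2)] d unfolding s3 Y_def ind_def by auto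
    moreover have "c 0 + c 2 = 0" using h[rule_format, OF v(3)] d unfolding s3 Y_def ind_def by auto
    ultimately have "c 0 = 0" "c 1 = 0" "c 2 = 0" by auto
    thus "\<forall>j<3. c j = 0" by (auto simp: numeral_3_eq_3 numeral_2_eq_2 less_Suc_eq)
  next
    fix c
    define x where "x = lc n 3 c Y"
    define y where "y = (\<lambda>l. c 1 * (ind a l - ind b l) + c 2 * (ind p l - ind q l))"
    have xC: "x \<in> carrier_vec n" unfolding x_def lc_def by simp
    have xy: "\<And>l. l < n \<Longrightarrow> x$l = c 0 + y l" unfolding x_def lc_def y_def s3 Y_def by simp
    have ys: "(\<Sum>l<n. y l) = 0" unfolding y_def
      by (simp add: sum.distrib sum_subtractf sum_distrib_left[symmetric] right_diff_distrib[symmetric] sum_ind v)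
    have y2: "\<And>l. (y l)^2 = (c 1)^2 * ind a l + (c 1)^2 * ind b l + (c 2)^2 * ind p l + (c 2)^2 * ind q l"
      unfolding y_def ind_def using d by (auto simp: power2_eq_square)
    have sy2: "(\<Sum>l<n. (y l)^2) = 2 * (c 1)^2 + 2 * (c 2)^2"
      unfolding y2 by (simp add: sum.distrib sum_distrib_left[symmetric] sum_ind v)
    let ?P = "{(a,b),(b,a),(p,q),(q,p)}"
    have yab: "y a = c 1" "y b = - c 1" "y p = c 2" "y q = - c 2"
      unfolding y_def ind_def using d by auto
    have sP: "(\<Sum>pr\<in>?P. (y (fst pr) - y (snd pr))^2) = 8 * (c 1)^2 + 8 * (c 2)^2"
      using d yab by (simp add: power2_eq_square)
    have "x \<bullet> (laplacian n E *\<^sub>v x) \<le> (real n - 2) * (x \<bullet> x)"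
    proof (rule lower_core[OF G _ xC xy ys, where P = ?P])
      show "2 \<le> n" using v d by linarith
      show "?P \<subseteq> {..<n} \<times> {..<n}" using v by auto
      show "\<And>i j. (i, j) \<in> ?P \<Longrightarrow> \<not> E i j" using ne sym v by auto
      show "4 * (\<Sum>l<n. (y l)^2) \<le> (\<Sum>pr\<in>?P. (y (fst pr) - y (snd pr))^2)"
        unfolding sP sy2 by simp
    qed
    thus "lc n 3 c Y \<bullet> (laplacian n E *\<^sub>v lc n 3 c Y) \<le> (real n - 2) * (lc n 3 c Y \<bullet> lc n 3 c Y)"
      unfolding x_def .
  qed
qed

lemma lower2: assumes G: "simple_graph n E" and sp: "spec n (laplacian n E) Q ds"
  and v: "a < n" "b < n" and d: "a \<noteq> b" and ne: "\<not> E a b"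
  shows "2 \<le> card {i. i < n \<and> ds!i \<le> real n - 2}"
proof -
  define Y where "Y = (\<lambda>(j::nat) (l::nat). if j = 0 then 1 else ind a l - ind b l)"
  have s2: "\<And>f. (\<Sum>j<(2::nat). f j) = f 0 + (f 1 :: real)" by (simp add: numeral_2_eq_2)
  have sym: "\<And>i j. i < n \<Longrightarrow> j < n \<Longrightarrow> E i j = E j i" using G unfolding simple_graph_def by blast
  show ?thesis
  proof (rule cf_le[OF lap_carrier sp, where Y = Y])
    fix c assume h: "\<forall>l<n. (\<Sum>j<2. c j * Y j l) = 0"
    have "c 0 + c 1 = 0" using h[rule_format, OF v(1)] d unfolding s2 Y_def ind_def by auto
    moreover have "c 0 - c 1 = 0" using h[rule_format, OF v(2)] d unfolding s2 Y_def ind_def by auto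
    ultimately have "c 0 = 0" "c 1 = 0" by auto
    thus "\<forall>j<2. c j = 0" by (auto simp: numeral_2_eq_2 less_Suc_eq)
  next
    fix c
    define x where "x = lc n 2 c Y"
    define y where "y = (\<lambda>l. c 1 * (ind a l - ind b l))"
    have xC: "x \<in> carrier_vec n" unfolding x_def lc_def by simp
    have xy: "\<And>l. l < n \<Longrightarrow> x$l = c 0 + y l" unfolding x_def lc_def y_def s2 Y_def by simp
    have ys: "(\<Sum>l<n. y l) = 0" unfolding y_def
      by (simp add: sum.distrib sum_subtractf sum_distrib_left[symmetric] right_diff_distrib[symmetric] sum_ind v)
    have y2: "\<And>l. (y l)^2 = (c 1)^2 * ind a l + (c 1)^2 * ind b l"
      unfolding y_def ind_def using d by (auto simp: power2_eq_square)
    have sy2: "(\<Sum>l<n. (y l)^2) = 2 * (c 1)^2"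
      unfolding y2 by (simp add: sum.distrib sum_distrib_left[symmetric] sum_ind v)
    let ?P = "{(a,b),(b,a)}"
    have yab: "y a = c 1" "y b = - c 1"
      unfolding y_def ind_def using d by auto
    have sP: "(\<Sum>pr\<in>?P. (y (fst pr) - y (snd pr))^2) = 8 * (c 1)^2"
      using d yab by (simp add: power2_eq_square)
    have "x \<bullet> (laplacian n E *\<^sub>v x) \<le> (real n - 2) * (x \<bullet> x)"
    proof (rule lower_core[OF G _ xC xy ys, where P = ?P])
      show "2 \<le> n" using v d by linarith
      show "?P \<subseteq> {..<n} \<times> {..<n}" using v by auto
      show "\<And>i j. (i, j) \<in> ?P \<Longrightarrow> \<not> E i j" using ne sym v by auto
      show "4 * (\<Sum>l<n. (y l)^2) \<le> (\<Sum>pr\<in>?P. (y (fst pr) - y (snd pr))^2)"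
        unfolding sP sy2 by simp
    qed
    thus "lc n 2 c Y \<bullet> (laplacian n E *\<^sub>v lc n 2 c Y) \<le> (real n - 2) * (lc n 2 c Y \<bullet> lc n 2 c Y)"
      unfolding x_def .
  qed
qed




lemma upper_star: assumes G: "simple_graph n E" and sp: "spec n (laplacian n E) Q ds"
  and x0: "x0 < n" and n2: "2 \<le> n"
  and star: "\<And>i j. i < n \<Longrightarrow> j < n \<Longrightarrow> i \<noteq> j \<Longrightarrow> \<not> E i j \<Longrightarrow> i = x0 \<or> j = x0"
  shows "n - 2 \<le> card {i. i < n \<and> real n - 2 < ds!i}"
proof -
  define w0 where "w0 = (if x0 = 0 then 1 else (0::nat))"
  have w0: "w0 < n" "w0 \<noteq> x0" unfolding w0_def using n2 by auto
  define V where "V = {0..<n} - {x0, w0}"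
  have cV: "card V = n - 2" unfolding V_def using x0 w0 by (simp add: card_Diff_subset)
  obtain g where g: "bij_betw g {0..<n-2} V" using ex_bij_betw_nat_finite[of V] cV unfolding V_def by auto
  have gV: "\<And>j. j < n - 2 \<Longrightarrow> g j \<in> V" using g unfolding bij_betw_def by auto
  have ginj: "\<And>i j. i < n - 2 \<Longrightarrow> j < n - 2 \<Longrightarrow> g i = g j \<Longrightarrow> i = j"
    using g unfolding bij_betw_def inj_on_def by auto
  define Y where "Y = (\<lambda>(j::nat) (l::nat). ind (g j) l - ind w0 l)"
  show ?thesis
  proof (rule cf_gt[OF lap_carrier sp, where Y = Y])
    fix c assume h: "\<forall>l<n. (\<Sum>j<n-2. c j * Y j l) = 0"
    show "\<forall>j<n-2. c j = 0"
    proof (intro allI impI)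
      fix i assume i: "i < n - 2"
      have gi: "g i < n" "g i \<noteq> w0" "g i \<noteq> x0" using gV[OF i] unfolding V_def by auto
      have "(\<Sum>j<n-2. c j * Y j (g i)) = (\<Sum>j<n-2. if j = i then c i else 0)"
        unfolding Y_def ind_def using gi ginj i by (intro sum.cong refl) auto
      also have "\<dots> = c i" using i by simp
      finally show "c i = 0" using h gi by simp
    qed
  next
    fix c
    define x where "x = lc n (n-2) c Y"
    assume nz: "lc n (n-2) c Y \<noteq> 0\<^sub>v n"
    have xC: "x \<in> carrier_vec n" unfolding x_def lc_def by simp
    have gx: "\<And>j. j < n-2 \<Longrightarrow> g j \<noteq> x0" using gV unfolding V_def by auto
    have "x$x0 = (\<Sum>j<n-2. c j * Y j x0)" unfolding x_def lc_def using x0 by simp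
    also have "\<dots> = 0" unfolding Y_def ind_def using w0 gx by (intro sum.neutral) auto
    finally have xx0: "x$x0 = 0" .
    have "(\<Sum>l<n. x$l) = (\<Sum>l<n. \<Sum>j<n-2. c j * Y j l)" unfolding x_def lc_def by simp
    also have "\<dots> = (\<Sum>j<n-2. c j * (\<Sum>l<n. Y j l))" by (subst sum.swap) (simp add: sum_distrib_left)
    also have "\<dots> = 0" unfolding Y_def using gV w0 unfolding V_def by (simp add: sum_subtractf sum_ind)
    finally have xs: "(\<Sum>l<n. x$l) = 0" .
    show "(real n - 2) * (lc n (n-2) c Y \<bullet> lc n (n-2) c Y) < lc n (n-2) c Y \<bullet> (laplacian n E *\<^sub>v lc n (n-2) c Y)"
      using upper_core[OF G x0 xC star xx0 xs] nz unfolding x_def by blast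
  qed
qed




lemma block_of3: assumes v: "v < 1 + p + q"
  shows "block_of [1,p,q] v = (if v = 0 then 0 else if v < 1 + p then 1 else 2)"
proof -
  have t0: "sum_list (take (Suc 0) [1,p,q]) = 1" by simp
  have t1: "sum_list (take (Suc 1) [1,p,q]) = 1 + p" by (simp add: numeral_2_eq_2)
  have t2: "sum_list (take (Suc 2) [1,p,q]) = 1 + p + q" by (simp add: numeral_3_eq_3)
  show ?thesis
  proof (cases "v = 0")
    case True thus ?thesis unfolding block_of_def by (intro Least_equality) auto
  next
    case False
    show ?thesis
    proof (cases "v < 1 + p")
      case True
      have "block_of [1,p,q] v = 1" unfolding block_of_def
      proof (intro Least_equality)
        show "v < sum_list (take (Suc 1) [1,p,q])" using True t1 by simp
        fix y assume "v < sum_list (take (Suc y) [1,p,q])"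
        thus "1 \<le> y" using False by (cases y) auto
      qed
      thus ?thesis using False True by simp
    next
      case F2: False
      have "block_of [1,p,q] v = 2" unfolding block_of_def
      proof (intro Least_equality)
        show "v < sum_list (take (Suc 2) [1,p,q])" using v t2 by simp
        fix y assume y: "v < sum_list (take (Suc y) [1,p,q])"
        show "2 \<le> y"
        proof (rule ccontr)
          assume "\<not> 2 \<le> y"
          hence "y = 0 \<or> y = 1" by auto
          thus False using y False F2 by auto
        qed
      qed
      thus ?thesis using False F2 by simp
    qed
  qed
qed

lemma cc3: assumes u: "u < 1 + p + q" and v: "v < 1 + p + q"
  shows "clique_chain [1,p,q] u v \<longleftrightarrow> u \<noteq> v \<and> \<not> (u = 0 \<and> 1 + p \<le> v) \<and> \<not> (v = 0 \<and> 1 + p \<le> u)"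
  unfolding clique_chain_def block_of3[OF u] block_of3[OF v] by auto




lemma count_eq: assumes G: "simple_graph n E" and sp: "spec n (laplacian n E) Q ds"
  shows "lap_count n E {0..real n - 2} = card {i. i < n \<and> ds!i \<le> real n - 2}"
  unfolding lap_count_spec[OF sp] using lap_psd[OF G sp] by (intro arg_cong[where f = card]) auto

lemma card_split: "card {i. i < n \<and> P i} + card {i. i < n \<and> \<not> P i} = n"
proof -
  have "card ({i. i < n \<and> P i} \<union> {i. i < n \<and> \<not> P i}) = card {i. i < n \<and> P i} + card {i. i < n \<and> \<not> P i}"
    by (rule card_Un_disjoint) auto
  also have "{i. i < n \<and> P i} \<union> {i. i < n \<and> \<not> P i} = {..<n}" by auto
  finally show ?thesis by simp
qed

lemma star_count2: assumes G: "simple_graph n E" and x0: "x0 < n" and n2: "2 \<le> n"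
  and star: "\<And>i j. i < n \<Longrightarrow> j < n \<Longrightarrow> i \<noteq> j \<Longrightarrow> \<not> E i j \<Longrightarrow> i = x0 \<or> j = x0"
  and ab: "a < n" "b < n" "a \<noteq> b" "\<not> E a b"
  shows "lap_count n E {0..real n - 2} = 2"
proof -
  obtain Q ds where sp: "spec n (laplacian n E) Q ds" using lap_spec[OF G] by blast
  have l: "2 \<le> card {i. i < n \<and> ds!i \<le> real n - 2}" using lower2[OF G sp ab] .
  have u: "n - 2 \<le> card {i. i < n \<and> \<not> ds!i \<le> real n - 2}"
    using upper_star[OF G sp x0 n2 star] by (simp add: not_le)
  have "card {i. i < n \<and> ds!i \<le> real n - 2} + card {i. i < n \<and> \<not> ds!i \<le> real n - 2} = n"
    by (rule card_split)
  thus ?thesis unfolding count_eq[OF G sp] using l u n2 by linarith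
qed

lemma alpha_facts: assumes G: "simple_graph n E" and al: "independence_number n E = 2"
  shows "\<exists>a b. a < n \<and> b < n \<and> a \<noteq> b \<and> \<not> E a b"
    and "\<And>a b c. a < n \<Longrightarrow> b < n \<Longrightarrow> c < n \<Longrightarrow> a \<noteq> b \<Longrightarrow> a \<noteq> c \<Longrightarrow> b \<noteq> c
          \<Longrightarrow> \<not> E a b \<Longrightarrow> \<not> E a c \<Longrightarrow> \<not> E b c \<Longrightarrow> False"
proof -
  have irr: "\<And>i. i < n \<Longrightarrow> \<not> E i i" and sym: "\<And>i j. i < n \<Longrightarrow> j < n \<Longrightarrow> E i j \<Longrightarrow> E j i"
    using G unfolding simple_graph_def by auto
  let ?F = "{S. independent_set n E S}"
  have fin: "finite (card ` ?F)"
  proof -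
    have "?F \<subseteq> Pow {0..<n}" unfolding independent_set_def by auto
    hence "finite ?F" by (rule finite_subset) simp
    thus ?thesis by simp
  qed
  have ne: "card ` ?F \<noteq> {}" using independent_set_def[of n E "{}"] by auto
  have "2 \<in> card ` ?F" using Max_in[OF fin ne] al unfolding independence_number_def by simp
  then obtain S where S: "independent_set n E S" "card S = 2" by auto
  then obtain a b where "S = {a,b}" "a \<noteq> b" by (meson card_2_iff)
  thus "\<exists>a b. a < n \<and> b < n \<and> a \<noteq> b \<and> \<not> E a b" using S(1) unfolding independent_set_def by auto
  fix a b c assume v: "a < n" "b < n" "c < n" and d: "a \<noteq> b" "a \<noteq> c" "b \<noteq> c"
    and e: "\<not> E a b" "\<not> E a c" "\<not> E b c"
  have "independent_set n E {a,b,c}" unfolding independent_set_def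
    using v e irr sym by auto
  hence "card {a,b,c} \<le> independence_number n E" unfolding independence_number_def
    using fin by (intro Max_ge) auto
  thus False using d al by simp
qed




lemma count2_star: assumes G: "simple_graph n E"
  and A1: "\<exists>a b. a < n \<and> b < n \<and> a \<noteq> b \<and> \<not> E a b"
  and A2: "\<And>a b c. a < n \<Longrightarrow> b < n \<Longrightarrow> c < n \<Longrightarrow> a \<noteq> b \<Longrightarrow> a \<noteq> c \<Longrightarrow> b \<noteq> c
          \<Longrightarrow> \<not> E a b \<Longrightarrow> \<not> E a c \<Longrightarrow> \<not> E b c \<Longrightarrow> False"
  and c2: "lap_count n E {0..real n - 2} = 2"
  shows "\<exists>x0<n. \<forall>i j. i < n \<longrightarrow> j < n \<longrightarrow> i \<noteq> j \<longrightarrow> \<not> E i j \<longrightarrow> i = x0 \<or> j = x0"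
proof -
  have sym: "\<And>i j. i < n \<Longrightarrow> j < n \<Longrightarrow> E i j = E j i" using G unfolding simple_graph_def by blast
  obtain Q ds where sp: "spec n (laplacian n E) Q ds" using lap_spec[OF G] by blast
  have cnt: "card {i. i < n \<and> ds!i \<le> real n - 2} = 2" using c2 count_eq[OF G sp] by simp
  define ne where "ne = (\<lambda>i j. i < n \<and> j < n \<and> i \<noteq> j \<and> \<not> E i j)"
  have nes: "\<And>i j. ne i j \<Longrightarrow> ne j i" unfolding ne_def using sym by auto
  have meet: "\<And>a b p q. ne a b \<Longrightarrow> ne p q \<Longrightarrow> a = p \<or> a = q \<or> b = p \<or> b = q"
  proof (rule ccontr)
    fix a b p q assume h: "ne a b" "ne p q" "\<not> (a = p \<or> a = q \<or> b = p \<or> b = q)"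
    have "3 \<le> card {i. i < n \<and> ds!i \<le> real n - 2}"
      using h unfolding ne_def by (intro lower3[OF G sp, of a b p q]) auto
    thus False using cnt by simp
  qed
  from A1 obtain a b where ab: "ne a b" unfolding ne_def by blast
  show ?thesis
  proof (cases "\<forall>i j. ne i j \<longrightarrow> i = a \<or> j = a")
    case True thus ?thesis using ab unfolding ne_def by blast
  next
    case False
    then obtain p q where pq: "ne p q" "p \<noteq> a" "q \<noteq> a" by blast
    obtain d where bd: "ne b d" "d \<noteq> a"
      using meet[OF ab pq(1)] pq nes by blast
    have "\<forall>i j. ne i j \<longrightarrow> i = b \<or> j = b"
    proof (intro allI impI)
      fix i j assume ij: "ne i j"
      show "i = b \<or> j = b"
      proof (rule ccontr)
        assume nb: "\<not> (i = b \<or> j = b)"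
        have m1: "a = i \<or> a = j" using meet[OF ab ij] nb by auto
        have m2: "d = i \<or> d = j" using meet[OF bd(1) ij] nb by auto
        have "ne a d" using m1 m2 ij bd(2) nes by auto
        thus False using A2[of a b d] ab bd unfolding ne_def by auto
      qed
    qed
    thus ?thesis using ab unfolding ne_def by blast
  qed
qed




lemma star_iso: assumes G: "simple_graph n E" and x0: "x0 < n"
  and star: "\<forall>i j. i < n \<longrightarrow> j < n \<longrightarrow> i \<noteq> j \<longrightarrow> \<not> E i j \<longrightarrow> i = x0 \<or> j = x0"
  and ab: "a < n" "b < n" "a \<noteq> b" "\<not> E a b"
  shows "\<exists>m. 2 \<le> m \<and> m \<le> n \<and> graph_iso n E (clique_chain [1, n - m, m - 1])"
proof -
  have sym: "\<And>i j. i < n \<Longrightarrow> j < n \<Longrightarrow> E i j = E j i" using G unfolding simple_graph_def by blast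
  have irr: "\<And>i. i < n \<Longrightarrow> \<not> E i i" using G unfolding simple_graph_def by blast
  have starI: "\<And>i j. i < n \<Longrightarrow> j < n \<Longrightarrow> i \<noteq> j \<Longrightarrow> i \<noteq> x0 \<Longrightarrow> j \<noteq> x0 \<Longrightarrow> E i j"
    using star by blast
  define B where "B = {j. j < n \<and> j \<noteq> x0 \<and> E x0 j}"
  define C where "C = {j. j < n \<and> j \<noteq> x0 \<and> \<not> E x0 j}"
  have fB: "finite B" and fC: "finite C" unfolding B_def C_def by auto
  have "card (B \<union> C) = card B + card C" using fB fC by (intro card_Un_disjoint) (auto simp: B_def C_def)
  moreover have "B \<union> C = {0..<n} - {x0}" unfolding B_def C_def by auto
  ultimately have cBC: "card B + card C = n - 1" using x0 by simp
  have "C \<noteq> {}"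
  proof (cases "a = x0")
    case True
    hence "b \<in> C" using ab sym[of a b] unfolding C_def by auto
    thus ?thesis by blast
  next
    case False
    hence "b = x0" using star ab by blast
    hence "a \<in> C" using ab sym[of a b] False unfolding C_def by auto
    thus ?thesis by blast
  qed
  hence cC: "card C \<ge> 1" using fC by (simp add: Suc_le_eq card_gt_0_iff)
  obtain gB where gB: "bij_betw gB B {0..<card B}" using ex_bij_betw_finite_nat[OF fB] by blast
  obtain gC where gC: "bij_betw gC C {0..<card C}" using ex_bij_betw_finite_nat[OF fC] by blast
  define f where "f = (\<lambda>j. if j = x0 then 0 else if E x0 j then 1 + gB j else 1 + card B + gC j)"
  have gBr: "\<And>j. j \<in> B \<Longrightarrow> gB j < card B" using gB unfolding bij_betw_def by auto
  have gCr: "\<And>j. j \<in> C \<Longrightarrow> gC j < card C" using gC unfolding bij_betw_def by auto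
  have gBi: "\<And>i j. i \<in> B \<Longrightarrow> j \<in> B \<Longrightarrow> gB i = gB j \<Longrightarrow> i = j" using gB unfolding bij_betw_def inj_on_def by blast
  have gCi: "\<And>i j. i \<in> C \<Longrightarrow> j \<in> C \<Longrightarrow> gC i = gC j \<Longrightarrow> i = j" using gC unfolding bij_betw_def inj_on_def by blast
  have n1: "n = 1 + card B + card C" using cBC cC x0 by linarith
  have fx0: "f x0 = 0" by (simp add: f_def)
  have fBv: "\<And>j. j \<in> B \<Longrightarrow> f j = 1 + gB j" unfolding f_def B_def by auto
  have fCv: "\<And>j. j \<in> C \<Longrightarrow> f j = 1 + card B + gC j" unfolding f_def C_def by auto
  have cases3: "\<And>j. j < n \<Longrightarrow> j = x0 \<or> j \<in> B \<or> j \<in> C" unfolding B_def C_def by auto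
  have frange: "\<And>j. j < n \<Longrightarrow> f j < 1 + card B + card C"
  proof -
    fix j assume j: "j < n"
    show "f j < 1 + card B + card C"
      using cases3[OF j] fx0 fBv gBr fCv gCr by fastforce
  qed
  have f0: "\<And>j. j < n \<Longrightarrow> f j = 0 \<longleftrightarrow> j = x0"
  proof -
    fix j assume j: "j < n"
    show "f j = 0 \<longleftrightarrow> j = x0" using cases3[OF j] fx0 fBv fCv by auto
  qed
  have fC': "\<And>j. j < n \<Longrightarrow> 1 + card B \<le> f j \<longleftrightarrow> j \<in> C"
  proof -
    fix j assume j: "j < n"
    have BC: "B \<inter> C = {}" unfolding B_def C_def by auto
    have "j = x0 \<Longrightarrow> j \<notin> C" unfolding C_def by auto
    moreover have "j \<in> B \<Longrightarrow> j \<notin> C" using BC by auto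
    ultimately show "1 + card B \<le> f j \<longleftrightarrow> j \<in> C" using cases3[OF j] fx0 fBv gBr fCv by fastforce
  qed
  have finj': "\<And>i j. i < n \<Longrightarrow> j < n \<Longrightarrow> f i = f j \<Longrightarrow> i = j"
  proof -
    fix i j assume i': "i < n" and j': "j < n" and e: "f i = f j"
    have BC: "B \<inter> C = {}" unfolding B_def C_def by auto
    have x0B: "x0 \<notin> B" "x0 \<notin> C" unfolding B_def C_def by auto
    consider "i = x0" | "i \<in> B" | "i \<in> C" using cases3[OF i'] by blast
    thus "i = j"
    proof cases
      case 1 thus ?thesis using e f0[OF i'] f0[OF j'] by metis
    next
      case 2
      consider "j = x0" | "j \<in> B" | "j \<in> C" using cases3[OF j'] by blast
      thus ?thesis
      proof cases
        case 1 thus ?thesis using e f0[OF i'] f0[OF j'] by metis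
      next
        case 3 thus ?thesis using e fBv[OF \<open>i \<in> B\<close>] fCv gBr[OF \<open>i \<in> B\<close>] by simp
      next
        case 2
        hence "gB i = gB j" using e fBv \<open>i \<in> B\<close> by simp
        thus ?thesis using gBi \<open>i \<in> B\<close> \<open>j \<in> B\<close> by blast
      qed
    next
      case 3
      consider "j = x0" | "j \<in> B" | "j \<in> C" using cases3[OF j'] by blast
      thus ?thesis
      proof cases
        case 1 thus ?thesis using e f0[OF i'] f0[OF j'] by metis
      next
        case 2 thus ?thesis using e fBv[OF \<open>j \<in> B\<close>] fCv[OF \<open>i \<in> C\<close>] gBr[OF \<open>j \<in> B\<close>] by simp
      next
        case 3
        hence "gC i = gC j" using e fCv \<open>i \<in> C\<close> by simp
        thus ?thesis using gCi \<open>i \<in> C\<close> \<open>j \<in> C\<close> by blast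
      qed
    qed
  qed
  have finj: "inj_on f {0..<n}" unfolding inj_on_def using finj' by auto
  have fimg: "f ` {0..<n} \<subseteq> {0..<n}" using frange n1 by auto
  have fbij: "bij_betw f {0..<n} {0..<n}"
    unfolding bij_betw_def using finj endo_inj_surj[OF _ fimg finj] by simp
  define m where "m = card C + 1"
  have nm: "n - m = card B" "m - 1 = card C" unfolding m_def using n1 by auto
  have adj: "\<forall>i<n. \<forall>j<n. E i j \<longleftrightarrow> clique_chain [1, n - m, m - 1] (f i) (f j)"
  proof (intro allI impI)
    fix i j assume i: "i < n" and j: "j < n"
    have fij: "f i = f j \<longleftrightarrow> i = j" using finj i j unfolding inj_on_def by auto
    have "clique_chain [1, n - m, m - 1] (f i) (f j) \<longleftrightarrow>
        f i \<noteq> f j \<and> \<not> (f i = 0 \<and> 1 + card B \<le> f j) \<and> \<not> (f j = 0 \<and> 1 + card B \<le> f i)"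
      unfolding nm by (rule cc3[OF frange[OF i] frange[OF j]])
    also have "\<dots> \<longleftrightarrow> i \<noteq> j \<and> \<not> (i = x0 \<and> j \<in> C) \<and> \<not> (j = x0 \<and> i \<in> C)"
      unfolding fij f0[OF i] f0[OF j] fC'[OF i] fC'[OF j] ..
    also have "\<dots> \<longleftrightarrow> E i j"
    proof (cases "i = j")
      case True thus ?thesis using irr[OF i] by simp
    next
      case ne: False
      show ?thesis
      proof (cases "i = x0")
        case True thus ?thesis using ne j unfolding C_def by auto
      next
        case F1: False
        show ?thesis
        proof (cases "j = x0")
          case True thus ?thesis using ne i F1 sym[OF i j] unfolding C_def by auto
        next
          case False thus ?thesis using ne F1 starI[OF i j ne F1 False] by simp
        qed
      qed
    qed
    finally show "E i j \<longleftrightarrow> clique_chain [1, n - m, m - 1] (f i) (f j)" by simp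
  qed
  have "2 \<le> m" "m \<le> n" unfolding m_def using cC n1 by auto
  thus ?thesis using fbij adj unfolding graph_iso_def by blast
qed


lemma iso_star: assumes m: "2 \<le> m" "m \<le> n"
  and iso: "graph_iso n E (clique_chain [1, n - m, m - 1])"
  shows "\<exists>x0<n. (\<forall>i j. i < n \<longrightarrow> j < n \<longrightarrow> i \<noteq> j \<longrightarrow> \<not> E i j \<longrightarrow> i = x0 \<or> j = x0)
     \<and> (\<exists>a b. a < n \<and> b < n \<and> a \<noteq> b \<and> \<not> E a b)"
proof -
  obtain f where fb: "bij_betw f {0..<n} {0..<n}"
    and fe: "\<forall>i<n. \<forall>j<n. E i j \<longleftrightarrow> clique_chain [1, n - m, m - 1] (f i) (f j)"
    using iso unfolding graph_iso_def by blast
  have n1: "n = 1 + (n - m) + (m - 1)" using m by simp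
  have fr: "\<And>i. i < n \<Longrightarrow> f i < 1 + (n - m) + (m - 1)" using fb n1 unfolding bij_betw_def by auto
  have finj: "\<And>i j. i < n \<Longrightarrow> j < n \<Longrightarrow> f i = f j \<Longrightarrow> i = j" using fb unfolding bij_betw_def inj_on_def by auto
  have "0 \<in> f ` {0..<n}" using fb m unfolding bij_betw_def by auto
  then obtain x0 where x0: "x0 < n" "f x0 = 0" by auto
  have "n - 1 \<in> f ` {0..<n}" using fb m unfolding bij_betw_def by auto
  then obtain j1 where j1: "j1 < n" "f j1 = n - 1" by auto
  have EE: "\<And>i j. i < n \<Longrightarrow> j < n \<Longrightarrow> E i j \<longleftrightarrow> (f i \<noteq> f j \<and> \<not> (f i = 0 \<and> 1 + (n - m) \<le> f j) \<and> \<not> (f j = 0 \<and> 1 + (n - m) \<le> f i))"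
    using fe cc3[OF fr fr] by blast
  have star: "\<forall>i j. i < n \<longrightarrow> j < n \<longrightarrow> i \<noteq> j \<longrightarrow> \<not> E i j \<longrightarrow> i = x0 \<or> j = x0"
  proof (intro allI impI)
    fix i j assume i: "i < n" and j: "j < n" and d: "i \<noteq> j" and ne: "\<not> E i j"
    have "f i \<noteq> f j" using finj i j d by blast
    hence "f i = 0 \<or> f j = 0" using EE[OF i j] ne by auto
    thus "i = x0 \<or> j = x0" using finj x0 i j by metis
  qed
  have "x0 \<noteq> j1" using x0 j1 m by auto
  moreover have "\<not> E x0 j1" using EE[OF x0(1) j1(1)] x0 j1 m by auto
  ultimately show ?thesis using star x0 j1 by blast
qed

theorem mainTheorem2:
  fixes n :: nat and E :: "nat \<Rightarrow> nat \<Rightarrow> bool"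
  assumes "simple_graph n E" and "independence_number n E = 2"
  shows "lap_count n E {0..real n - 2} = 2 \<longleftrightarrow>
    (\<exists>m::nat. 2 \<le> m \<and> m \<le> n \<and> graph_iso n E (clique_chain [1, n - m, m - 1]))"
proof
  assume c2: "lap_count n E {0..real n - 2} = 2"
  have "\<exists>x0<n. \<forall>i j. i < n \<longrightarrow> j < n \<longrightarrow> i \<noteq> j \<longrightarrow> \<not> E i j \<longrightarrow> i = x0 \<or> j = x0"
    by (rule count2_star[OF assms(1) alpha_facts(1)[OF assms] _ c2], rule alpha_facts(2)[OF assms], assumption+)
  then obtain x0 where x0: "x0 < n" and star: "\<forall>i j. i < n \<longrightarrow> j < n \<longrightarrow> i \<noteq> j \<longrightarrow> \<not> E i j \<longrightarrow> i = x0 \<or> j = x0"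
    by blast
  obtain a b where ab: "a < n" "b < n" "a \<noteq> b" "\<not> E a b" using alpha_facts(1)[OF assms] by blast
  show "\<exists>m::nat. 2 \<le> m \<and> m \<le> n \<and> graph_iso n E (clique_chain [1, n - m, m - 1])"
    by (rule star_iso[OF assms(1) x0 star ab])
next
  assume "\<exists>m::nat. 2 \<le> m \<and> m \<le> n \<and> graph_iso n E (clique_chain [1, n - m, m - 1])"
  then obtain m where m: "2 \<le> m" "m \<le> n" and iso: "graph_iso n E (clique_chain [1, n - m, m - 1])" by blast
  obtain x0 a b where x0: "x0 < n" and star: "\<forall>i j. i < n \<longrightarrow> j < n \<longrightarrow> i \<noteq> j \<longrightarrow> \<not> E i j \<longrightarrow> i = x0 \<or> j = x0"
    and ab: "a < n" "b < n" "a \<noteq> b" "\<not> E a b" using iso_star[OF m iso] by blast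
  show "lap_count n E {0..real n - 2} = 2"
    by (rule star_count2[OF assms(1) x0 _ _ ab]) (use m star in auto)
qed

end
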